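(* Let $\gamma\in(1,2]$, $\delta>0$. Assume that $f$ is convex and $L$-smooth relative to $d$ on $Q$, that $V$ satisfies the triangular scaling property with scaling factor $\gamma$, and that for every $y\in Q$ the pair $(f_\delta(y),\nabla f_\delta(y))$ is a $(\delta,L)$-oracle of $f$ at $y$. Consider the scheme AccBPGM-2 below with $\theta_k=\frac{\gamma}{k+\gamma}$ for all $k\ge0$, and suppose the constants $L_{k+1}$ satisfy, for every $k\ge0$: $L_{k+2}\ge L_{k+1}$, $L_{k+1}\ge(\theta_{k+1}/\theta_k)^{\gamma}$, $f(x_{k+1})\le g(x_{k+1}|y_k)+L_{k+1}V(x_{k+1},y_k)+\delta$, and $L_{k+1}<2L$. Let $x_*$ be a minimizer of $f$ on $Q$. Then for every $N\ge1$, $$f(x_N)-f(x_* )\le2L\Big(\frac{\gamma}{\gamma+N-1}\Big)^{\gamma}V(x_*,x_0)+\big(2(N-1)L+1\big)\delta.$$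
   Context: Setting. $\mathbb{E}$ is a finite-dimensional real vector space with a norm $\|\cdot\|$ and dual space $\mathbb{E}^*$; $\langle g,x\rangle$ denotes the value of $g\in\mathbb{E}^*$ at $x\in\mathbb{E}$. $Q\subset\mathbb{E}$ is a closed convex set. $f:Q\to\mathbb{R}$ is convex and differentiable on an open set containing the relative interior $\mathrm{rint}\,Q$. The prox-function $d:Q\to\mathbb{R}$ is continuously differentiable and $1$-strongly convex with respect to $\|\cdot\|$. The Bregman divergence is $V(x,y)=d(x)-d(y)-\langle\nabla d(y),x-y\rangle$. All minimization subproblems appearing in the algorithms are assumed to have minimizers. Relative smoothness: $f$ is $L$-smooth relative to $d$ on $Q$ if $f(y)\le f(x)+\langle\nabla f(x),y-x\rangle+LV(y,x)$ for all $x\in\mathrm{rint}\,Q$, $y\in Q$. Triangular scaling property with factor $\gamma>0$: $V((1-\theta)x+\theta z,(1-\theta)x+\theta\tilde z)\le\theta^{\gamma}V(z,\tilde z)$ for all $x,z,\tilde z\in Q$ and all $\theta\in[0,1]$. $(\delta,L)$-oracle: a pair $(f_\delta(y),\nabla f_\delta(y))\in\mathbb{R}\times\mathbb{E}^*$ is a $(\delta,L)$-oracle of $f$ at $y$ if $0\le f(x)-\big(f_\delta(y)+\langle\nabla f_\delta(y),x-y\rangle\big)\le LV(x,y)+\delta$ for all $x\in Q$. Notation: $g(x|y):=f_\delta(y)+\langle\nabla f_\delta(y),x-y\rangle$. Scheme AccBPGM-2 (adaptive version). Input: $x_0\in\mathrm{rint}\,Q$, $\gamma\in(1,2]$, $\delta>0$.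 Set $z_0=x_0$, $\theta_0=1$. For $k=0,1,2,\dots$: a constant $L_{k+1}>0$ is chosen, and $y_k=(1-\theta_k)x_k+\theta_kz_k$; $z_{k+1}=\arg\min_{z\in Q}\{g(z|y_k)+\theta_k^{\gamma-1}L_{k+1}V(z,z_k)\}$; $x_{k+1}=(1-\theta_k)x_k+\theta_kz_{k+1}$. *)

theory Defs
  imports "HOL-Analysis.Analysis"
begin

text \<open>The finite-dimensional space E is an abstract type of class euclidean_space;
  the (arbitrary) norm of the paper is a separate function nrm. Elements of the dual
  space are represented by vectors via the inner product (Riesz representation).\<close>

definition is_norm :: "('a::real_vector \<Rightarrow> real) \<Rightarrow> bool" where
  "is_norm nrm \<longleftrightarrow> (\<forall>x. 0 \<le> nrm x) \<and> (\<forall>x. nrm x = 0 \<longleftrightarrow> x = 0)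
     \<and> (\<forall>c x. nrm (c *\<^sub>R x) = \<bar>c\<bar> * nrm x) \<and> (\<forall>x y. nrm (x + y) \<le> nrm x + nrm y)"

definition strongly_convex_1 :: "('a::real_vector \<Rightarrow> real) \<Rightarrow> 'a set \<Rightarrow> ('a \<Rightarrow> real) \<Rightarrow> bool" where
  "strongly_convex_1 nrm Q d \<longleftrightarrow> (\<forall>x\<in>Q. \<forall>y\<in>Q. \<forall>t::real. 0 \<le> t \<and> t \<le> 1 \<longrightarrow>
     d (t *\<^sub>R x + (1 - t) *\<^sub>R y) \<le> t * d x + (1 - t) * d y - t * (1 - t) / 2 * (nrm (x - y))\<^sup>2)"

definition bregman :: "('a::real_inner \<Rightarrow> real) \<Rightarrow> ('a \<Rightarrow> 'a) \<Rightarrow> 'a \<Rightarrow> 'a \<Rightarrow> real" where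
  "bregman d gd x y = d x - d y - gd y \<bullet> (x - y)"

definition rel_smooth :: "real \<Rightarrow> ('a::real_inner \<Rightarrow> real) \<Rightarrow> ('a \<Rightarrow> 'a) \<Rightarrow> ('a \<Rightarrow> real) \<Rightarrow> ('a \<Rightarrow> 'a) \<Rightarrow> 'a set \<Rightarrow> bool" where
  "rel_smooth L f gf d gd Q \<longleftrightarrow> (\<forall>x\<in>rel_interior Q. \<forall>y\<in>Q.
     f y \<le> f x + gf x \<bullet> (y - x) + L * bregman d gd y x)"

definition triangular_scaling :: "real \<Rightarrow> ('a::real_inner \<Rightarrow> real) \<Rightarrow> ('a \<Rightarrow> 'a) \<Rightarrow> 'a set \<Rightarrow> bool" where
  "triangular_scaling \<gamma> d gd Q \<longleftrightarrow> (\<forall>x\<in>Q. \<forall>z\<in>Q. \<forall>zt\<in>Q. \<forall>\<theta>::real. 0 \<le> \<theta> \<and> \<theta> \<le> 1 \<longrightarrow>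
     bregman d gd ((1 - \<theta>) *\<^sub>R x + \<theta> *\<^sub>R z) ((1 - \<theta>) *\<^sub>R x + \<theta> *\<^sub>R zt) \<le> \<theta> powr \<gamma> * bregman d gd z zt)"

definition is_dL_orc :: "real \<Rightarrow> real \<Rightarrow> ('a::real_inner \<Rightarrow> real) \<Rightarrow> ('a \<Rightarrow> real) \<Rightarrow> ('a \<Rightarrow> 'a) \<Rightarrow> 'a set \<Rightarrow> 'a \<Rightarrow> real \<Rightarrow> 'a \<Rightarrow> bool" where
  "is_dL_orc \<delta> L f d gd Q y fy gy \<longleftrightarrow> (\<forall>x\<in>Q.
     0 \<le> f x - (fy + gy \<bullet> (x - y)) \<and> f x - (fy + gy \<bullet> (x - y)) \<le> L * bregman d gd x y + \<delta>)"

end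

theory Submission imports Defs begin


lemma dir_deriv:
  fixes d :: "'a::real_inner \<Rightarrow> real"
  assumes "(d has_derivative (\<lambda>h. g \<bullet> h)) (at u)"
  shows "((\<lambda>t. d (u + t *\<^sub>R v)) has_real_derivative (g \<bullet> v)) (at 0)"
proof -
  have l: "((\<lambda>t::real. u + t *\<^sub>R v) has_derivative (\<lambda>t. t *\<^sub>R v)) (at 0)"
    by (auto intro!: derivative_eq_intros)
  have "((\<lambda>t. d (u + t *\<^sub>R v)) has_derivative (\<lambda>t. g \<bullet> (t *\<^sub>R v))) (at 0)"
  proof -
    have a: "(d has_derivative (\<lambda>h. g \<bullet> h)) (at (u + 0 *\<^sub>R v))" using assms by simp
    show ?thesis using has_derivative_compose[OF l a] .
  qed
  moreover have "(\<lambda>t. g \<bullet> (t *\<^sub>R v)) = (*) (g \<bullet> v)" by (auto simp: mult.commute)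
  ultimately show ?thesis by (simp add: has_field_derivative_def)
qed

lemma deriv_nonneg:
  fixes h :: "real \<Rightarrow> real"
  assumes der: "(h has_real_derivative D) (at 0)" and c: "0 < c"
    and le: "\<forall>t. 0 < t \<and> t \<le> 1 \<longrightarrow> c * h 0 \<le> c * h t + t * K"
  shows "0 \<le> c * D + K"
proof (rule ccontr)
  assume n: "\<not> 0 \<le> c * D + K"
  have "((\<lambda>t. c * h t + t * K) has_real_derivative (c * D + K)) (at 0)"
    by (auto intro!: derivative_eq_intros der)
  from DERIV_neg_dec_right[OF this] n obtain e where e: "e > 0"
    "\<forall>t>0. t < e \<longrightarrow> c * h 0 + 0 * K > c * h (0 + t) + t * K" by auto
  define t where "t = min (e/2) 1"
  have "0 < t" "t < e" "t \<le> 1" using e by (auto simp: t_def)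
  with e le show False by force
qed

lemma bregman_nonneg:
  fixes d :: "'a::real_inner \<Rightarrow> real"
  assumes sc: "strongly_convex_1 nrm Q d" and x: "x \<in> Q" and y: "y \<in> Q"
    and der: "(d has_derivative (\<lambda>h. gd y \<bullet> h)) (at y)"
  shows "0 \<le> bregman d gd x y"
proof -
  have D: "((\<lambda>t. - d (y + t *\<^sub>R (x - y))) has_real_derivative - (gd y \<bullet> (x - y))) (at 0)"
    using DERIV_minus[OF dir_deriv[OF der]] .
  have "\<forall>t. 0 < t \<and> t \<le> 1 \<longrightarrow> 1 * - d (y + 0 *\<^sub>R (x - y)) \<le> 1 * - d (y + t *\<^sub>R (x - y)) + t * (d x - d y)"
  proof (intro allI impI)
    fix t :: real assume t: "0 < t \<and> t \<le> 1"
    have eq: "y + t *\<^sub>R (x - y) = t *\<^sub>R x + (1 - t) *\<^sub>R y" by (simp add: algebra_simps)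
    have "d (t *\<^sub>R x + (1 - t) *\<^sub>R y) \<le> t * d x + (1 - t) * d y - t * (1 - t) / 2 * (nrm (x - y))\<^sup>2"
      using sc x y t unfolding strongly_convex_1_def by auto
    moreover have "0 \<le> t * (1 - t) / 2 * (nrm (x - y))\<^sup>2" using t by auto
    ultimately have "d (y + t *\<^sub>R (x - y)) \<le> t * d x + (1 - t) * d y" unfolding eq by linarith
    then show "1 * - d (y + 0 *\<^sub>R (x - y)) \<le> 1 * - d (y + t *\<^sub>R (x - y)) + t * (d x - d y)"
      by (simp add: algebra_simps)
  qed
  from deriv_nonneg[OF D _ this] show ?thesis by (simp add: bregman_def inner_diff_left)
qed

lemma three_point:
  fixes d :: "'a::real_inner \<Rightarrow> real"
  assumes Q: "convex Q" and z: "z \<in> Q" and c: "0 < c" and w: "w \<in> Q"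
    and der: "(d has_derivative (\<lambda>h. gd z \<bullet> h)) (at z)"
    and opt: "\<forall>w\<in>Q. b + a \<bullet> (z - p) + c * bregman d gd z zk \<le> b + a \<bullet> (w - p) + c * bregman d gd w zk"
  shows "b + a \<bullet> (z - p) + c * bregman d gd z zk + c * bregman d gd w z \<le> b + a \<bullet> (w - p) + c * bregman d gd w zk"
proof -
  define v where "v = w - z"
  define K where "K = a \<bullet> v - c * (gd zk \<bullet> v)"
  have "\<forall>t. 0 < t \<and> t \<le> 1 \<longrightarrow> c * d (z + 0 *\<^sub>R v) \<le> c * d (z + t *\<^sub>R v) + t * K"
  proof (intro allI impI)
    fix t :: real assume t: "0 < t \<and> t \<le> 1"
    have eq: "z + t *\<^sub>R v = (1 - t) *\<^sub>R z + t *\<^sub>R w" by (simp add: v_def algebra_simps)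
    have "z + t *\<^sub>R v \<in> Q" unfolding eq using convexD[OF Q z w, of "1-t" t] t by auto
    from opt[rule_format, OF this]
    show "c * d (z + 0 *\<^sub>R v) \<le> c * d (z + t *\<^sub>R v) + t * K"
      by (simp add: bregman_def K_def inner_add_right inner_diff_right inner_diff_left algebra_simps)
  qed
  from deriv_nonneg[OF dir_deriv[OF der] c this]
  have "0 \<le> c * (gd z \<bullet> v) + K" .
  then show ?thesis
    by (simp add: bregman_def K_def v_def inner_diff_right inner_diff_left algebra_simps)
qed



lemma amgm:
  fixes n g :: real
  assumes n: "0 < n" and g: "1 < g"
  shows "n * (n + g) powr (g - 1) \<le> (n + g - 1) powr g"
proof -
  have "n powr (1/g) * (n+g) powr ((g-1)/g) \<le> (1/g)*n + ((g-1)/g)*(n+g)"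
    using Youngs_inequality_0[of "1/g" "(g-1)/g" n "n+g"] n g by (auto simp: field_simps)
  also have "\<dots> = n + g - 1" using g by (simp add: field_simps)
  finally have h: "n powr (1/g) * (n+g) powr ((g-1)/g) \<le> n + g - 1" .
  have "(n powr (1/g) * (n+g) powr ((g-1)/g)) powr g \<le> (n + g - 1) powr g"
    using powr_mono2[OF _ _ h, of g] g n by auto
  moreover have "(n powr (1/g) * (n+g) powr ((g-1)/g)) powr g = n * (n + g) powr (g - 1)"
    using n g by (simp add: powr_mult powr_powr)
  ultimately show ?thesis by simp
qed

lemma ratio:
  fixes n g :: real
  assumes n: "1 \<le> n" and g: "1 < g"
  shows "(1 - g/(n+g)) * (g/(n-1+g)) powr g \<le> (g/(n+g)) powr g"
proof -
  have p1: "0 < n + g" "0 < n - 1 + g" using n g by auto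
  have A: "n * (n + g) powr (g - 1) \<le> (n - 1 + g) powr g" using amgm[of n g] n g by (simp add: algebra_simps)
  have B: "(n+g) powr g = (n+g) * (n+g) powr (g - 1)"
    using p1 by (simp add: powr_diff)
  have "(1 - g/(n+g)) * (g/(n-1+g)) powr g = n/(n+g) * (g powr g / (n-1+g) powr g)"
    using p1 g by (simp add: powr_divide field_simps)
  also have "\<dots> = (n * (n+g) powr (g-1)) * g powr g / ((n+g) powr g * (n-1+g) powr g)"
    unfolding B proof -
    have aux: "\<And>P R G. 0 < P \<Longrightarrow> 0 < R \<Longrightarrow> n / (n + g) * (G / R) = n * P * G / ((n + g) * P * R)"
    proof -
      fix P R G :: real assume "0 < P" "0 < R"
      then show "n / (n + g) * (G / R) = n * P * G / ((n + g) * P * R)"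
        using p1 by (simp add: divide_simps)
    qed
    show "n / (n + g) * (g powr g / (n - 1 + g) powr g) =
      n * (n + g) powr (g - 1) * g powr g / ((n + g) * (n + g) powr (g - 1) * (n - 1 + g) powr g)"
      by (rule aux) (use p1 in auto)
  qed
  also have "\<dots> \<le> (n - 1 + g) powr g * g powr g / ((n+g) powr g * (n-1+g) powr g)"
    by (rule divide_right_mono[OF mult_right_mono[OF A]]) (use p1 in \<open>auto simp: B\<close>)
  also have "\<dots> = (g/(n+g)) powr g" using p1 g by (simp add: powr_divide)
  finally show ?thesis .
qed


lemma combine:
  fixes fx1 fy Gx1 L1 Bx \<delta> t Gxk Gz1 fxk c B P1 Gxs Pk fxs tg :: real
  assumes "fx1 \<le> fy + Gx1 + L1 * Bx + \<delta>"
    "Gx1 = (1 - t) * Gxk + t * Gz1"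
    "(1 - t) * (fy + Gxk) \<le> (1 - t) * fxk"
    "t * (fy + Gz1 + c * B + c * P1) \<le> t * (fy + Gxs + c * Pk)"
    "t * (fy + Gxs + c * Pk) \<le> t * (fxs + c * Pk)"
    "L1 * Bx \<le> L1 * (tg * B)"
    "t * c = tg * L1"
  shows "fx1 \<le> (1 - t) * fxk + t * (fxs + c * Pk) - t * c * P1 + \<delta>"
proof -
  have e: "t * c * B = L1 * (tg * B)" using assms(7) by (metis mult.assoc mult.commute)
  have e2: "B * (c * t) = B * (L1 * tg)" using assms(7) by (simp add: mult.commute)
  show ?thesis using assms(1-6) e2 by (simp add: algebra_simps del: mult_cancel_left1 mult_cancel_left)
qed

theorem theorem3:
  fixes Q :: "'a::euclidean_space set"
    and nrm :: "'a \<Rightarrow> real"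
    and f d :: "'a \<Rightarrow> real" and gf gd :: "'a \<Rightarrow> 'a"
    and f\<delta> :: "'a \<Rightarrow> real" and gf\<delta> :: "'a \<Rightarrow> 'a"
    and \<gamma> \<delta> L :: real
    and x y z :: "nat \<Rightarrow> 'a" and Lk :: "nat \<Rightarrow> real" and \<theta> :: "nat \<Rightarrow> real"
    and xs :: 'a
  assumes norm: "is_norm nrm"
    and Q: "closed Q" "convex Q"
    and f_conv: "convex_on Q f"
    and f_diff: "\<exists>U. open U \<and> rel_interior Q \<subseteq> U \<and>
                   (\<forall>u\<in>U. (f has_derivative (\<lambda>h. gf u \<bullet> h)) (at u))"
    and d_diff: "\<exists>U. open U \<and> Q \<subseteq> U \<and> continuous_on U gd \<and>
                   (\<forall>u\<in>U. (d has_derivative (\<lambda>h. gd u \<bullet> h)) (at u))"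
    and d_sc: "strongly_convex_1 nrm Q d"
    and \<gamma>: "1 < \<gamma>" "\<gamma> \<le> 2"
    and \<delta>: "0 < \<delta>"
    and smooth: "rel_smooth L f gf d gd Q"
    and tsp: "triangular_scaling \<gamma> d gd Q"
    and orc: "\<forall>u\<in>Q. is_dL_orc \<delta> L f d gd Q u (f\<delta> u) (gf\<delta> u)"
    and \<theta>_def: "\<forall>k. \<theta> k = \<gamma> / (real k + \<gamma>)"
    and x0: "x 0 \<in> rel_interior Q"
    and z0: "z 0 = x 0"
    and y_def: "\<forall>k. y k = (1 - \<theta> k) *\<^sub>R x k + \<theta> k *\<^sub>R z k"
    and z_step: "\<forall>k. z (Suc k) \<in> Q \<and> (\<forall>w\<in>Q.
         f\<delta> (y k) + gf\<delta> (y k) \<bullet> (z (Suc k) - y k) + \<theta> k powr (\<gamma> - 1) * Lk (Suc k) * bregman d gd (z (Suc k)) (z k)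
       \<le> f\<delta> (y k) + gf\<delta> (y k) \<bullet> (w - y k) + \<theta> k powr (\<gamma> - 1) * Lk (Suc k) * bregman d gd w (z k))"
    and x_step: "\<forall>k. x (Suc k) = (1 - \<theta> k) *\<^sub>R x k + \<theta> k *\<^sub>R z (Suc k)"
    and Lk_pos: "\<forall>k. 0 < Lk (Suc k)"
    and Lk_mono: "\<forall>k. Lk (Suc k) \<le> Lk (Suc (Suc k))"
    and Lk_ratio: "\<forall>k. (\<theta> (Suc k) / \<theta> k) powr \<gamma> \<le> Lk (Suc k)"
    and Lk_desc: "\<forall>k. f (x (Suc k)) \<le> f\<delta> (y k) + gf\<delta> (y k) \<bullet> (x (Suc k) - y k)
                         + Lk (Suc k) * bregman d gd (x (Suc k)) (y k) + \<delta>"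
    and Lk_bound: "\<forall>k. Lk (Suc k) < 2 * L"
    and xs: "xs \<in> Q" "\<forall>u\<in>Q. f xs \<le> f u"
  shows "\<forall>N\<ge>1. f (x N) - f xs \<le> 2 * L * (\<gamma> / (\<gamma> + real N - 1)) powr \<gamma> * bregman d gd xs (x 0)
                  + (2 * (real N - 1) * L + 1) * \<delta>"
  proof -
  obtain U where U: "open U" "Q \<subseteq> U" "\<forall>u\<in>U. (d has_derivative (\<lambda>h. gd u \<bullet> h)) (at u)"
    using d_diff by blast
  have dder: "\<And>u. u \<in> Q \<Longrightarrow> (d has_derivative (\<lambda>h. gd u \<bullet> h)) (at u)" using U by blast
  have th_pos: "\<And>k. 0 < \<theta> k" using \<theta>_def \<gamma> by auto
  have th_le1: "\<And>k. \<theta> k \<le> 1" using \<theta>_def \<gamma> by auto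
  have th0: "\<theta> 0 = 1" using \<theta>_def \<gamma> by simp
  have th_mono: "\<And>i j. i \<le> j \<Longrightarrow> \<theta> j \<le> \<theta> i"
    using \<theta>_def \<gamma> by (auto intro!: divide_left_mono mult_pos_pos)
  have zQ: "\<And>k. z k \<in> Q"
  proof -
    fix k show "z k \<in> Q"
      using z0 x0 rel_interior_subset z_step by (cases k) auto
  qed
  have xQ: "\<And>k. x k \<in> Q"
  proof -
    fix k show "x k \<in> Q"
    proof (induction k)
      case 0 then show ?case using x0 rel_interior_subset by auto
    next
      case (Suc k)
      then show ?case unfolding x_step[rule_format]
        using convexD[OF Q(2) Suc zQ[of "Suc k"], of "1 - \<theta> k" "\<theta> k"] th_pos[of k] th_le1[of k] by auto
    qed
  qed
  have yQ: "\<And>k. y k \<in> Q"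
    unfolding y_def[rule_format]
    using convexD[OF Q(2) xQ zQ] th_pos th_le1 by (metis diff_add_cancel diff_ge_0_iff_ge less_eq_real_def)
  define e where "e k = f (x k) - f xs" for k
  define \<Phi> where "\<Phi> k = bregman d gd xs (z k)" for k
  define a where "a k = \<theta> k powr \<gamma> * Lk (Suc k)" for k
  have e_nn: "\<And>k. 0 \<le> e k" using xs xQ by (simp add: e_def)
  have Phi_nn: "0 \<le> \<Phi> k" for k unfolding \<Phi>_def
    using bregman_nonneg[where gd=gd, OF d_sc xs(1) zQ[of k] dder[OF zQ[of k]]] by blast
  have a_pos: "0 < a k" for k unfolding a_def using th_pos[of k] Lk_pos
    by (intro mult_pos_pos) auto
  have S: "\<And>k. e (Suc k) \<le> (1 - \<theta> k) * e k + a k * (\<Phi> k - \<Phi> (Suc k)) + \<delta>"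
  proof -
    fix k
    define t where "t = \<theta> k"
    define c where "c = t powr (\<gamma> - 1) * Lk (Suc k)"
    define fy where "fy = f\<delta> (y k)"
    define gy where "gy = gf\<delta> (y k)"
    define L1 where "L1 = Lk (Suc k)"
    have t: "0 < t" "t \<le> 1" using th_pos th_le1 by (auto simp: t_def)
    have L1: "0 < L1" using Lk_pos by (simp add: L1_def)
    have c: "0 < c" using t Lk_pos by (simp add: c_def)
    have tc: "t * c = a k" using t \<gamma> unfolding c_def a_def t_def
      by (simp add: powr_diff field_simps)
    have x1: "x (Suc k) = (1 - t) *\<^sub>R x k + t *\<^sub>R z (Suc k)" using x_step t_def by simp
    have yk: "y k = (1 - t) *\<^sub>R x k + t *\<^sub>R z k" using y_def t_def by simp
    have desc: "f (x (Suc k)) \<le> fy + gy \<bullet> (x (Suc k) - y k) + L1 * bregman d gd (x (Suc k)) (y k) + \<delta>"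
      using Lk_desc by (simp add: fy_def gy_def L1_def)
    have lin: "gy \<bullet> (x (Suc k) - y k) = (1 - t) * (gy \<bullet> (x k - y k)) + t * (gy \<bullet> (z (Suc k) - y k))"
    proof -
      have "x (Suc k) - y k = (1 - t) *\<^sub>R (x k - y k) + t *\<^sub>R (z (Suc k) - y k)"
        unfolding x1 by (simp add: algebra_simps)
      then show ?thesis by (simp add: inner_add_right)
    qed
    have ts: "bregman d gd (x (Suc k)) (y k) \<le> t powr \<gamma> * bregman d gd (z (Suc k)) (z k)"
      using tsp xQ[of k] zQ[of "Suc k"] zQ[of k] t unfolding triangular_scaling_def x1 yk by auto
    have opt: "\<forall>w\<in>Q. fy + gy \<bullet> (z (Suc k) - y k) + c * bregman d gd (z (Suc k)) (z k)
               \<le> fy + gy \<bullet> (w - y k) + c * bregman d gd w (z k)"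
      using z_step by (simp add: fy_def gy_def c_def t_def L1_def mult.assoc)
    have tp: "fy + gy \<bullet> (z (Suc k) - y k) + c * bregman d gd (z (Suc k)) (z k) + c * \<Phi> (Suc k)
               \<le> fy + gy \<bullet> (xs - y k) + c * \<Phi> k"
      unfolding \<Phi>_def
      by (rule three_point[where gd=gd, OF Q(2) zQ[of "Suc k"] c xs(1) dder[OF zQ[of "Suc k"]] opt])
    have o1: "fy + gy \<bullet> (x k - y k) \<le> f (x k)"
      using orc yQ[of k] xQ[of k] unfolding is_dL_orc_def fy_def gy_def by force
    have o2: "fy + gy \<bullet> (xs - y k) \<le> f xs"
      using orc yQ[of k] xs(1) unfolding is_dL_orc_def fy_def gy_def by force
    have m1: "(1 - t) * (fy + gy \<bullet> (x k - y k)) \<le> (1 - t) * f (x k)"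
      using mult_left_mono[OF o1, of "1 - t"] t by simp
    have m2: "t * (fy + gy \<bullet> (z (Suc k) - y k) + c * bregman d gd (z (Suc k)) (z k) + c * \<Phi> (Suc k))
              \<le> t * (fy + gy \<bullet> (xs - y k) + c * \<Phi> k)"
      using mult_left_mono[OF tp, of t] t by simp
    have m3: "t * (fy + gy \<bullet> (xs - y k) + c * \<Phi> k) \<le> t * (f xs + c * \<Phi> k)"
      using mult_left_mono[OF o2, of t] t by (simp add: algebra_simps)
    have m4: "L1 * bregman d gd (x (Suc k)) (y k) \<le> L1 * (t powr \<gamma> * bregman d gd (z (Suc k)) (z k))"
      using mult_left_mono[OF ts, of L1] L1 by simp
    have tcL: "t * c = t powr \<gamma> * L1" using tc by (simp add: a_def t_def L1_def)
    have "f (x (Suc k)) \<le> (1 - t) * f (x k) + t * (f xs + c * \<Phi> k) - t * c * \<Phi> (Suc k) + \<delta>"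
      by (rule combine[OF desc lin m1 m2 m3 m4 tcL])
    then show "e (Suc k) \<le> (1 - \<theta> k) * e k + a k * (\<Phi> k - \<Phi> (Suc k)) + \<delta>"
      unfolding e_def tc[symmetric] t_def[symmetric] by (simp add: algebra_simps)
  qed
  have R: "\<And>n. (1 - \<theta> (Suc n)) * a n \<le> a (Suc n)"
  proof -
    fix n
    have r: "(1 - \<theta> (Suc n)) * \<theta> n powr \<gamma> \<le> \<theta> (Suc n) powr \<gamma>"
      using ratio[of "real (Suc n)" \<gamma>] \<gamma> \<theta>_def by (simp add: algebra_simps)
    have "(1 - \<theta> (Suc n)) * a n \<le> (1 - \<theta> (Suc n)) * \<theta> n powr \<gamma> * Lk (Suc (Suc n))"
      unfolding a_def using th_le1[of "Suc n"] Lk_mono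
      by (simp add: mult.assoc mult_left_mono)
    also have "\<dots> \<le> a (Suc n)" unfolding a_def
      using mult_right_mono[OF r, of "Lk (Suc (Suc n))"] Lk_pos by (simp add: less_imp_le)
    finally show "(1 - \<theta> (Suc n)) * a n \<le> a (Suc n)" .
  qed
  have P: "\<And>m. e (Suc m) / a m + \<Phi> (Suc m) \<le> \<Phi> 0 + (\<Sum>k<Suc m. \<delta> / a k)"
  proof -
    fix m show "e (Suc m) / a m + \<Phi> (Suc m) \<le> \<Phi> 0 + (\<Sum>k<Suc m. \<delta> / a k)"
    proof (induction m)
      case 0
      have "e 1 \<le> a 0 * (\<Phi> 0 - \<Phi> 1) + \<delta>" using S[of 0] th0 by simp
      then have "e 1 / a 0 \<le> (\<Phi> 0 - \<Phi> 1) + \<delta> / a 0"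
        using a_pos[of 0] by (simp add: field_simps)
      then show ?case by simp
    next
      case (Suc m)
      have s: "e (Suc (Suc m)) / a (Suc m) \<le> (1 - \<theta> (Suc m)) / a (Suc m) * e (Suc m)
              + (\<Phi> (Suc m) - \<Phi> (Suc (Suc m))) + \<delta> / a (Suc m)"
        using S[of "Suc m"] a_pos[of "Suc m"] by (simp add: field_simps)
      have q: "(1 - \<theta> (Suc m)) / a (Suc m) \<le> 1 / a m"
        using R[of m] a_pos[of m] a_pos[of "Suc m"] by (simp add: field_simps)
      have "(1 - \<theta> (Suc m)) / a (Suc m) * e (Suc m) \<le> 1 / a m * e (Suc m)"
        using mult_right_mono[OF q e_nn] .
      then show ?case using s Suc.IH by simp
    qed
  qed
  show ?thesis
  proof (intro allI impI)
    fix N :: nat assume N: "1 \<le> N"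
    then obtain m where m: "N = Suc m" by (cases N) auto
    have "e (Suc m) / a m \<le> \<Phi> 0 + (\<Sum>k<Suc m. \<delta> / a k)" using P[of m] Phi_nn[of "Suc m"] by linarith
    then have E: "e (Suc m) \<le> a m * \<Phi> 0 + (\<Sum>k<Suc m. a m * \<delta> / a k)"
      using a_pos[of m] by (simp add: field_simps sum_distrib_left)
    have L0: "0 < L" using Lk_pos[rule_format, of 0] Lk_bound[rule_format, of 0] by linarith
    have T1: "a m * \<Phi> 0 \<le> 2 * L * \<theta> m powr \<gamma> * \<Phi> 0"
    proof -
      have "\<theta> m powr \<gamma> * Lk (Suc m) \<le> \<theta> m powr \<gamma> * (2 * L)"
        using Lk_bound[rule_format, of m] by (intro mult_left_mono) auto
      from mult_right_mono[OF this Phi_nn[of 0]] show ?thesis unfolding a_def by (simp add: ac_simps)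
    qed
    have each: "\<And>k. k < m \<Longrightarrow> a m * \<delta> / a k \<le> 2 * L * \<delta>"
    proof -
      fix k assume k: "k < m"
      have "a m \<le> \<theta> m powr \<gamma> * (2 * L)" unfolding a_def
        using Lk_bound[rule_format, of m] by (intro mult_left_mono) auto
      also have "\<dots> \<le> \<theta> (Suc k) powr \<gamma> * (2 * L)"
        proof -
        have "\<theta> m powr \<gamma> \<le> \<theta> (Suc k) powr \<gamma>"
          using th_mono[of "Suc k" m] k th_pos[of m] \<gamma> by (intro powr_mono2) auto
        then show ?thesis using L0 by (intro mult_right_mono) auto
      qed
      also have "\<theta> (Suc k) powr \<gamma> \<le> a k"
      proof -
        have "\<theta> (Suc k) powr \<gamma> / \<theta> k powr \<gamma> \<le> Lk (Suc k)"
          using Lk_ratio th_pos by (simp add: powr_divide less_imp_le)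
        then show ?thesis unfolding a_def using th_pos[of k] by (simp add: field_simps)
      qed
      then have "\<theta> (Suc k) powr \<gamma> * (2 * L) \<le> a k * (2 * L)" using L0 by simp
      finally have "a m \<le> a k * (2 * L)" .
      then show "a m * \<delta> / a k \<le> 2 * L * \<delta>"
        using a_pos[of k] \<delta> by (simp add: field_simps mult_right_mono)
    qed
    have "(\<Sum>k<Suc m. a m * \<delta> / a k) = (\<Sum>k<m. a m * \<delta> / a k) + \<delta>"
      using a_pos[of m] by simp
    also have "(\<Sum>k<m. a m * \<delta> / a k) \<le> (\<Sum>k<m. 2 * L * \<delta>)"
      by (rule sum_mono) (use each in auto)
    finally have T2: "(\<Sum>k<Suc m. a m * \<delta> / a k) \<le> real m * (2 * L * \<delta>) + \<delta>" by simp
    have th: "\<theta> m = \<gamma> / (\<gamma> + real N - 1)" using \<theta>_def m by (simp add: algebra_simps)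
    have "f (x N) - f xs = e (Suc m)" by (simp add: e_def m)
    also have "\<dots> \<le> 2 * L * \<theta> m powr \<gamma> * \<Phi> 0 + (real m * (2 * L * \<delta>) + \<delta>)"
      using E T1 T2 by linarith
    also have "\<dots> = 2 * L * (\<gamma> / (\<gamma> + real N - 1)) powr \<gamma> * bregman d gd xs (x 0)
                  + (2 * (real N - 1) * L + 1) * \<delta>"
      using th z0 m by (simp add: \<Phi>_def algebra_simps)
    finally show "f (x N) - f xs \<le> 2 * L * (\<gamma> / (\<gamma> + real N - 1)) powr \<gamma> * bregman d gd xs (x 0)
                  + (2 * (real N - 1) * L + 1) * \<delta>" .
  qed
qed

end
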